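(* Let $A$ be a finite alphabet and $n\ge 1$. Then: (a) there exist $A$, $n$ and a weakly regular $P\subseteq (A^\ast)^n$ whose complement $(A^\ast)^n\setminus P$ is not weakly regular; (b) for all weakly regular $P,Q\subseteq (A^\ast)^n$, the union $P\cup Q$ is weakly regular; (c) there exist $A$, $n$ and weakly regular $P,Q\subseteq(A^\ast)^n$ such that $P\cap Q$ is not weakly regular; (d) for every $n\ge2$ and every weakly regular $P\subseteq (A^\ast)^n$, the language $\{(x_2,\ldots,x_n):(\exists x_1\in A^\ast)(x_1,\ldots,x_n)\in P\}$ is weakly regular; (e) there exist $A$, $n\ge 2$ and a weakly regular $P\subseteq(A^\ast)^n$ such that $\{(x_2,\ldots,x_n):(\forall x_1\in A^\ast)(x_1,\ldots,x_n)\in P\}$ is not weakly regular.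
   Context: An $n$-variable language (predicate) over a finite alphabet $A$ is a subset of $(A^\ast)^n$, $A^\ast$ the set of finite words over $A$. A shuffle of $(w_1,\ldots,w_n)$ is an ordering of all the letters of the $w_i$ respecting the order within each $w_i$; $w\$$ denotes $w$ followed by a new symbol $\$$. Weakly regular: $L$ is weakly regular if it is accepted by an $n$-tape non-deterministic semi-sorted asynchronous automaton, i.e., a non-deterministic finite state automaton over $A\sqcup\{\$\}$ (possibly several start states and $\epsilon$-transitions) with a partition of its states into sets $S_1,\ldots,S_n$; it accepts $(w_1,\ldots,w_n)$ iff there is a path from a start state to an accept state reading a shuffle of $(w_1\$,\ldots,w_n\$)$, where a letter-labelled transition out of a state in $S_i$ reads the next letter of the $i$-th tape ($\epsilon$-transitions read nothing). *)

theory Defs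
  imports Main
begin

(* Transition labels: None = epsilon, Some None = the end marker $,
   Some (Some a) = the letter a of the alphabet.
   The partition S_1,...,S_n of the states is given by  tape :: nat => nat
   (state q belongs to S_(tape q + 1), tapes indexed 0..n-1).
   Tape contents are words over 'a option (None = $). *)

inductive wr_run ::
  "(nat \<times> 'a option option \<times> nat) set \<Rightarrow> (nat \<Rightarrow> nat) \<Rightarrow> nat set
   \<Rightarrow> nat \<Rightarrow> 'a option list list \<Rightarrow> bool"
  for T tape F where
  fin: "q \<in> F \<Longrightarrow> (\<forall>r\<in>set rs. r = []) \<Longrightarrow> wr_run T tape F q rs"
| eps: "(q, None, q') \<in> T \<Longrightarrow> wr_run T tape F q' rs \<Longrightarrow> wr_run T tape F q rs"
| step: "(q, Some c, q') \<in> T \<Longrightarrow> tape q < length rs \<Longrightarrow> rs ! (tape q) = c # r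
         \<Longrightarrow> wr_run T tape F q' (rs[tape q := r]) \<Longrightarrow> wr_run T tape F q rs"

definition add_end :: "'a list \<Rightarrow> 'a option list" where
  "add_end w = map Some w @ [None]"

definition wr_accepts ::
  "nat set \<Rightarrow> (nat \<times> 'a option option \<times> nat) set \<Rightarrow> (nat \<Rightarrow> nat) \<Rightarrow> nat set
   \<Rightarrow> 'a list list \<Rightarrow> bool" where
  "wr_accepts I T tape F ws = (\<exists>q\<in>I. wr_run T tape F q (map add_end ws))"

definition tuples :: "'a set \<Rightarrow> nat \<Rightarrow> 'a list list set" where
  "tuples A n = {ws. length ws = n \<and> (\<forall>w\<in>set ws. w \<in> lists A)}"

definition weakly_regular :: "'a set \<Rightarrow> nat \<Rightarrow> 'a list list set \<Rightarrow> bool" where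
  "weakly_regular A n L =
    (\<exists>(Q::nat set) I F (T :: (nat \<times> 'a option option \<times> nat) set) tape.
       finite Q \<and> I \<subseteq> Q \<and> F \<subseteq> Q \<and>
       T \<subseteq> Q \<times> ({None, Some None} \<union> Some ` Some ` A) \<times> Q \<and>
       (\<forall>q\<in>Q. tape q < n) \<and>
       L = {ws \<in> tuples A n. wr_accepts I T tape F ws})"

end

theory Submission
  imports Defs
begin


inductive path ::
  "(nat \<times> 'a option option \<times> nat) set \<Rightarrow> (nat \<Rightarrow> nat)
   \<Rightarrow> nat \<Rightarrow> 'a option list list \<Rightarrow> nat \<Rightarrow> bool"
  for T tape where
  prefl: "\<forall>u\<in>set us. u = [] \<Longrightarrow> path T tape p us p"
| peps: "(p, None, p') \<in> T \<Longrightarrow> path T tape p' us q \<Longrightarrow> path T tape p us q"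
| pstep: "(p, Some c, p') \<in> T \<Longrightarrow> tape p < length us \<Longrightarrow> path T tape p' us q
         \<Longrightarrow> path T tape p (us[tape p := c # us ! tape p]) q"

lemma map2_update:
  "length us = length rs \<Longrightarrow> k < length us \<Longrightarrow>
   map2 f (us[k := x]) rs = (map2 f us rs)[k := f x (rs ! k)]"
  by (rule nth_equalityI) (auto simp: nth_list_update)

lemma path_compose:
  assumes "path T tape p us q" "wr_run T tape F q rs" "length us = length rs"
  shows "wr_run T tape F p (map2 (@) us rs)"
  using assms
proof (induction rule: path.induct)
  case (prefl us p)
  have "map2 (@) us rs = rs"
    by (rule nth_equalityI) (use prefl in \<open>auto simp: set_conv_nth\<close>)
  then show ?case using prefl by simp
next
  case (peps p p' us q)
  then show ?case by (blast intro: wr_run.eps)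
next
  case (pstep p c p' us q)
  have L: "length us = length rs" using pstep by simp
  have e: "map2 (@) (us[tape p := c # us ! tape p]) rs
        = (map2 (@) us rs)[tape p := c # (us ! tape p @ rs ! tape p)]"
    using map2_update[OF L pstep(2), of "(@)"] by simp
  have r: "wr_run T tape F p' (map2 (@) us rs)" using pstep L by simp
  have m: "(map2 (@) us rs) ! tape p = us ! tape p @ rs ! tape p" using pstep(2) L by simp
  have r2: "wr_run T tape F p' ((map2 (@) us rs)[tape p := us ! tape p @ rs ! tape p])"
    using r m by (metis list_update_id)
  show ?case unfolding e
    by (rule wr_run.step[OF pstep(1)]) (use pstep(2) L r2 in simp_all)
qed

lemma run_split:
  assumes "wr_run T tape F p rs" "0 < length rs" "rs ! 0 = u @ w"
  shows "\<exists>q vs rs'. path T tape p vs q \<and> wr_run T tape F q rs' \<and> length vs = length rs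
     \<and> length rs' = length rs \<and> (\<forall>k<length rs. rs ! k = vs ! k @ rs' ! k) \<and> vs ! 0 = u"
  using assms
proof (induction arbitrary: u w rule: wr_run.induct)
  case (fin q rs)
  then have "u = []" by (cases rs) auto
  then show ?case using fin
    by (intro exI[of _ q] exI[of _ "replicate (length rs) []"] exI[of _ rs])
       (auto intro!: prefl wr_run.fin)
next
  case (eps q q' rs)
  then obtain q2 vs rs' where "path T tape q' vs q2 \<and> wr_run T tape F q2 rs' \<and> length vs = length rs
     \<and> length rs' = length rs \<and> (\<forall>k<length rs. rs ! k = vs ! k @ rs' ! k) \<and> vs ! 0 = u"
    by blast
  then show ?case using eps(1) by (blast intro: peps)
next
  case (step q c q' rs r)
  show ?case
  proof (cases "u = []")
    case True
    have "wr_run T tape F q rs" using step(1,2,3,4) by (blast intro: wr_run.step)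
    then show ?thesis using True step
      by (intro exI[of _ q] exI[of _ "replicate (length rs) []"] exI[of _ rs])
         (auto intro!: prefl)
  next
    case False
    show ?thesis
    proof (cases "tape q = 0")
      case True
      then obtain u' where u: "u = c # u'" and r: "r = u' @ w"
        using step False by (cases u) auto
      have lt: "0 < length (rs[tape q := r])" using step(2) by (metis length_list_update gr_zeroI less_zeroE)
      have "(rs[tape q := r]) ! 0 = u' @ w" using True r step(2) by simp
      from step.IH[OF lt this] obtain q2 vs rs' where H: "path T tape q' vs q2" "wr_run T tape F q2 rs'"
        "length vs = length rs" "length rs' = length rs"
        "\<forall>k<length rs. (rs[tape q := r]) ! k = vs ! k @ rs' ! k" "vs ! 0 = u'"
        by auto
      have p: "path T tape q (vs[tape q := c # vs ! tape q]) q2"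
        using pstep[OF step(1) _ H(1)] H(3) step(2) by simp
      show ?thesis
        apply (rule exI[of _ q2], rule exI[of _ "vs[tape q := c # vs ! tape q]"], rule exI[of _ rs'])
        using p H True step(2,3) u
        by (auto simp: nth_list_update split: if_splits)
    next
      case False2: False
      have lt: "0 < length (rs[tape q := r])" using step(2) by (metis length_list_update gr_zeroI less_zeroE)
      have "(rs[tape q := r]) ! 0 = u @ w" using False2 step.prems(2) by simp
      from step.IH[OF lt this] obtain q2 vs rs' where H: "path T tape q' vs q2" "wr_run T tape F q2 rs'"
        "length vs = length rs" "length rs' = length rs"
        "\<forall>k<length rs. (rs[tape q := r]) ! k = vs ! k @ rs' ! k" "vs ! 0 = u"
        by auto
      have p: "path T tape q (vs[tape q := c # vs ! tape q]) q2"
        using pstep[OF step(1) _ H(1)] H(3) step(2) by simp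
      show ?thesis
        apply (rule exI[of _ q2], rule exI[of _ "vs[tape q := c # vs ! tape q]"], rule exI[of _ rs'])
        using p H False2 step(2,3)
        by (auto simp: nth_list_update split: if_splits)
    qed
  qed
qed



lemma add_end_split:
  "xs @ ys = add_end w \<Longrightarrow>
   (\<exists>w1 w2. w = w1 @ w2 \<and> xs = map Some w1 \<and> ys = add_end w2) \<or> (xs = add_end w \<and> ys = [])"
proof (induction xs arbitrary: w)
  case Nil
  then show ?case by auto
next
  case (Cons x xs)
  show ?case
  proof (cases w)
    case Nil
    then show ?thesis using Cons.prems by (auto simp: add_end_def)
  next
    case (Cons c w')
    then have x: "x = Some c" and r: "xs @ ys = add_end w'" using Cons.prems by (auto simp: add_end_def)
    from Cons.IH[OF r] show ?thesis
    proof
      assume "\<exists>w1 w2. w' = w1 @ w2 \<and> xs = map Some w1 \<and> ys = add_end w2"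
      then obtain w1 w2 where "w' = w1 @ w2 \<and> xs = map Some w1 \<and> ys = add_end w2" by blast
      then show ?thesis using x Cons by (intro disjI1 exI[of _ "c # w1"] exI[of _ w2]) auto
    next
      assume "xs = add_end w' \<and> ys = []"
      then show ?thesis using x Cons by (auto simp: add_end_def)
    qed
  qed
qed

lemma path_in_Q: "path T tape p vs q \<Longrightarrow> T \<subseteq> Q \<times> X \<times> Q \<Longrightarrow> p \<in> Q \<Longrightarrow> q \<in> Q"
  by (induction rule: path.induct) auto

lemma tuples2: "[x, y] \<in> tuples A 2 \<longleftrightarrow> x \<in> lists A \<and> y \<in> lists A"
  by (auto simp: tuples_def)

lemma nonwr:
  fixes A :: "'a set" and a b :: 'a
  assumes wr: "weakly_regular A 2 L" and ab: "a \<in> A" "b \<in> A"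
  and mem: "\<And>i. \<exists>y. [replicate i a @ replicate i b, y] \<in> L"
  and uniq: "\<And>i j y. [replicate i a @ replicate j b, y] \<in> L \<Longrightarrow> i = j"
  shows False
proof -
  obtain Q I F T tape where fQ: "finite Q" and IQ: "I \<subseteq> Q" and
    TQ: "T \<subseteq> Q \<times> ({None, Some None} \<union> Some ` Some ` A) \<times> Q" and
    Ldef: "L = {ws \<in> tuples A 2. wr_accepts I T tape F ws}"
    using wr unfolding weakly_regular_def by blast
  define good where "good i pb \<longleftrightarrow> (\<exists>y q0 vs rs'. y \<in> lists A \<and> q0 \<in> I \<and>
      path T tape q0 vs (fst pb) \<and> wr_run T tape F (fst pb) rs' \<and> length vs = 2 \<and> length rs' = 2 \<and>
      vs ! 0 = map Some (replicate i a) \<and>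
      add_end (replicate i a @ replicate i b) = vs ! 0 @ rs' ! 0 \<and>
      add_end y = vs ! 1 @ rs' ! 1 \<and> snd pb = (None \<in> set (vs ! 1)))" for i pb
  have ex: "\<exists>pb. good i pb" for i
  proof -
    obtain y where y: "[replicate i a @ replicate i b, y] \<in> L" using mem by blast
    then have yA: "y \<in> lists A" and acc: "wr_accepts I T tape F [replicate i a @ replicate i b, y]"
      using Ldef by (auto simp: tuples2)
    then obtain q0 where q0: "q0 \<in> I" and
      run: "wr_run T tape F q0 [add_end (replicate i a @ replicate i b), add_end y]"
      unfolding wr_accepts_def by auto
    have e0: "[add_end (replicate i a @ replicate i b), add_end y] ! 0
       = map Some (replicate i a) @ (map Some (replicate i b) @ [None])"
      by (simp add: add_end_def)
    obtain q vs rs' where H: "path T tape q0 vs q" "wr_run T tape F q rs'" "length vs = 2"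
      "length rs' = 2" "\<forall>k<2. [add_end (replicate i a @ replicate i b), add_end y] ! k = vs ! k @ rs' ! k"
      "vs ! 0 = map Some (replicate i a)"
      using run_split[OF run _ e0] by auto
    have "good i (q, None \<in> set (vs ! 1))"
      unfolding good_def
      apply (rule exI[of _ y], rule exI[of _ q0], rule exI[of _ vs], rule exI[of _ rs'])
      using H yA q0 by (auto dest: spec[of _ 0] spec[of _ 1])
    then show ?thesis by blast
  qed
  define g where "g i = (SOME pb. good i pb)" for i
  have gg: "good i (g i)" for i unfolding g_def using ex by (rule someI_ex)
  have gQ: "g i \<in> Q \<times> (UNIV :: bool set)" for i
  proof -
    from gg[of i] obtain q0 vs where "q0 \<in> I" "path T tape q0 vs (fst (g i))"
      unfolding good_def by blast
    then have "fst (g i) \<in> Q" using path_in_Q[OF _ TQ] IQ by blast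
    then show ?thesis by (cases "g i") auto
  qed
  have "\<not> inj_on g {0..2 * card Q}"
  proof
    assume inj: "inj_on g {0..2 * card Q}"
    have "card {0..2 * card Q} \<le> card (Q \<times> (UNIV :: bool set))"
    proof (rule card_inj_on_le[OF inj])
      show "g ` {0..2 * card Q} \<subseteq> Q \<times> UNIV" using gQ by blast
      show "finite (Q \<times> (UNIV :: bool set))" using fQ by simp
    qed
    then show False by (simp add: card_cartesian_product)
  qed
  then obtain i j where ij: "i \<noteq> j" "g i = g j" unfolding inj_on_def by blast
  obtain yi q0 vsi rsi where Hi: "yi \<in> lists A" "q0 \<in> I" "path T tape q0 vsi (fst (g i))"
    "length vsi = 2" "length rsi = 2" "vsi ! 0 = map Some (replicate i a)"
    "add_end yi = vsi ! 1 @ rsi ! 1" "snd (g i) = (None \<in> set (vsi ! 1))"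
    using gg[of i] unfolding good_def by blast
  obtain yj q0' vsj rsj where Hj: "yj \<in> lists A" "wr_run T tape F (fst (g j)) rsj"
    "length vsj = 2" "length rsj = 2" "vsj ! 0 = map Some (replicate j a)"
    "add_end (replicate j a @ replicate j b) = vsj ! 0 @ rsj ! 0"
    "add_end yj = vsj ! 1 @ rsj ! 1" "snd (g j) = (None \<in> set (vsj ! 1))"
    using gg[of j] unfolding good_def by blast
  have run: "wr_run T tape F q0 (map2 (@) vsi rsj)"
    using path_compose[OF Hi(3) _] Hj(2) ij(2) Hi(4) Hj(4) by simp
  have s0: "rsj ! 0 = map Some (replicate j b) @ [None]"
    using Hj(5,6) by (simp add: add_end_def)
  have bb: "(None \<in> set (vsi ! 1)) = (None \<in> set (vsj ! 1))" using Hi(8) Hj(8) ij(2) by simp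
  obtain w where wA: "w \<in> lists A" and w1: "vsi ! 1 @ rsj ! 1 = add_end w"
  proof (cases "None \<in> set (vsi ! 1)")
    case True
    from add_end_split[OF Hi(7)[symmetric]] True have "vsi ! 1 = add_end yi"
      by (auto simp: add_end_def)
    moreover from add_end_split[OF Hj(7)[symmetric]] True bb have "rsj ! 1 = []"
      by (auto simp: add_end_def)
    ultimately show ?thesis using that Hi(1) by simp
  next
    case False
    from add_end_split[OF Hi(7)[symmetric]] False obtain w1 w2 where
      A1: "yi = w1 @ w2" "vsi ! 1 = map Some w1"
      by (auto simp: add_end_def)
    from add_end_split[OF Hj(7)[symmetric]] False bb obtain w3 w4 where
      A2: "yj = w3 @ w4" "rsj ! 1 = add_end w4"
      by (auto simp: add_end_def)
    show ?thesis
      apply (rule that[of "w1 @ w4"])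
      using A1 A2 Hi(1) Hj(1) by (auto simp: add_end_def)
  qed
  have eq: "map2 (@) vsi rsj = map add_end [replicate i a @ replicate j b, w]"
  proof (rule nth_equalityI)
    show "length (map2 (@) vsi rsj) = length (map add_end [replicate i a @ replicate j b, w])"
      using Hi(4) Hj(4) by simp
  next
    fix k assume "k < length (map2 (@) vsi rsj)"
    then have "k = 0 \<or> k = 1" using Hi(4) Hj(4) by auto
    then show "map2 (@) vsi rsj ! k = map add_end [replicate i a @ replicate j b, w] ! k"
      using Hi(4,6) Hj(4) s0 w1 by (auto simp: add_end_def)
  qed
  have "[replicate i a @ replicate j b, w] \<in> L"
    unfolding Ldef using ab wA run eq Hi(2)
    by (auto simp: tuples2 wr_accepts_def)
  then show False using uniq ij(1) by blast
qed



lemma embed':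
  assumes Tf: "\<And>p c q'. (f p, c, q') \<in> T \<longleftrightarrow> (\<exists>q. q' = f q \<and> (p, c, q) \<in> TT)"
  and tp: "\<And>p. tape (f p) = tapeB p"
  and Ff: "\<And>p. f p \<in> F \<longleftrightarrow> p \<in> FF"
  shows "wr_run T tape F k rs \<Longrightarrow> k = f p \<Longrightarrow> wr_run TT tapeB FF p rs"
proof (induction arbitrary: p rule: wr_run.induct)
  case (fin q rs)
  then show ?case using Ff by (auto intro: wr_run.fin)
next
  case (eps q q' rs)
  then obtain q0 where "q' = f q0" "(p, None, q0) \<in> TT" using Tf by blast
  then show ?case using eps by (blast intro: wr_run.eps)
next
  case (step q c q' rs r)
  then obtain q0 where "q' = f q0" "(p, Some c, q0) \<in> TT" using Tf by blast
  then show ?case using step tp by (metis wr_run.step)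
qed

lemma embed'':
  assumes Tf: "\<And>p c q'. (f p, c, q') \<in> T \<longleftrightarrow> (\<exists>q. q' = f q \<and> (p, c, q) \<in> TT)"
  and tp: "\<And>p. tape (f p) = tapeB p"
  and Ff: "\<And>p. f p \<in> F \<longleftrightarrow> p \<in> FF"
  shows "wr_run TT tapeB FF p rs \<Longrightarrow> wr_run T tape F (f p) rs"
proof (induction rule: wr_run.induct)
  case (fin q rs)
  then show ?case using Ff by (auto intro: wr_run.fin)
next
  case (eps q q' rs)
  then show ?case using Tf by (blast intro: wr_run.eps)
next
  case (step q c q' rs r)
  then show ?case using Tf tp by (metis wr_run.step)
qed

lemma embed:
  assumes "\<And>p c q'. (f p, c, q') \<in> T \<longleftrightarrow> (\<exists>q. q' = f q \<and> (p, c, q) \<in> TT)"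
  and "\<And>p. tape (f p) = tapeB p"
  and "\<And>p. f p \<in> F \<longleftrightarrow> p \<in> FF"
  shows "wr_run T tape F (f p) rs \<longleftrightarrow> wr_run TT tapeB FF p rs"
  using embed'[where f=f and T=T and TT=TT and tape=tape and tapeB=tapeB and F=F and FF=FF, OF assms]
    embed''[where f=f and T=T and TT=TT and tape=tape and tapeB=tapeB and F=F and FF=FF, OF assms] by blast

lemma wr_union:
  assumes P: "weakly_regular A n P" and Q: "weakly_regular A n P2"
  shows "weakly_regular A n (P \<union> P2)"
proof -
  obtain Q1 I1 F1 T1 t1 where H1: "finite Q1" "I1 \<subseteq> Q1" "F1 \<subseteq> Q1"
    "T1 \<subseteq> Q1 \<times> ({None, Some None} \<union> Some ` Some ` A) \<times> Q1" "\<forall>q\<in>Q1. t1 q < n"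
    "P = {ws \<in> tuples A n. wr_accepts I1 T1 t1 F1 ws}"
    using P unfolding weakly_regular_def by blast
  obtain Q2 I2 F2 T2 t2 where H2: "finite Q2" "I2 \<subseteq> Q2" "F2 \<subseteq> Q2"
    "T2 \<subseteq> Q2 \<times> ({None, Some None} \<union> Some ` Some ` A) \<times> Q2" "\<forall>q\<in>Q2. t2 q < n"
    "P2 = {ws \<in> tuples A n. wr_accepts I2 T2 t2 F2 ws}"
    using Q unfolding weakly_regular_def by blast
  define T where "T = {(2*p, c, 2*q) | p c q. (p, c, q) \<in> T1} \<union> {(2*p+1, c, 2*q+1) | p c q. (p, c, q) \<in> T2}"
  define tp where "tp k = (if even k then t1 (k div 2) else t2 (k div 2))" for k :: nat
  define F where "F = (\<lambda>q. 2*q) ` F1 \<union> (\<lambda>q. 2*q+1) ` F2"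
  define I where "I = (\<lambda>q. 2*q) ` I1 \<union> (\<lambda>q. 2*q+1) ` I2"
  define QQ where "QQ = (\<lambda>q. 2*q) ` Q1 \<union> (\<lambda>q. 2*q+1) ` Q2"
  have E1: "wr_run T tp F (2*p) rs \<longleftrightarrow> wr_run T1 t1 F1 p rs" for p rs
    by (rule embed) (auto simp: T_def tp_def F_def; presburger)+
  have E2: "wr_run T tp F (2*p+1) rs \<longleftrightarrow> wr_run T2 t2 F2 p rs" for p rs
    by (rule embed) (auto simp: T_def tp_def F_def; presburger)+
  have acc: "wr_accepts I T tp F ws \<longleftrightarrow> wr_accepts I1 T1 t1 F1 ws \<or> wr_accepts I2 T2 t2 F2 ws" for ws
  proof
    assume "wr_accepts I T tp F ws"
    then obtain q where q: "q \<in> I" "wr_run T tp F q (map add_end ws)" unfolding wr_accepts_def by blast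
    then consider (a) p where "q = 2*p" "p \<in> I1" | (b) p where "q = 2*p+1" "p \<in> I2" unfolding I_def by blast
    then show "wr_accepts I1 T1 t1 F1 ws \<or> wr_accepts I2 T2 t2 F2 ws"
      by cases (use q E1 E2 in \<open>auto simp: wr_accepts_def\<close>)
  next
    assume "wr_accepts I1 T1 t1 F1 ws \<or> wr_accepts I2 T2 t2 F2 ws"
    then show "wr_accepts I T tp F ws"
    proof
      assume "wr_accepts I1 T1 t1 F1 ws"
      then obtain p where "p \<in> I1" "wr_run T1 t1 F1 p (map add_end ws)" unfolding wr_accepts_def by blast
      then have "2*p \<in> I" "wr_run T tp F (2*p) (map add_end ws)" using E1 unfolding I_def by auto
      then show ?thesis unfolding wr_accepts_def by blast
    next
      assume "wr_accepts I2 T2 t2 F2 ws"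
      then obtain p where "p \<in> I2" "wr_run T2 t2 F2 p (map add_end ws)" unfolding wr_accepts_def by blast
      then have "2*p+1 \<in> I" "wr_run T tp F (2*p+1) (map add_end ws)" using E2 unfolding I_def by auto
      then show ?thesis unfolding wr_accepts_def by blast
    qed
  qed
  show ?thesis
    unfolding weakly_regular_def
    apply (rule exI[of _ QQ], rule exI[of _ I], rule exI[of _ F], rule exI[of _ T], rule exI[of _ tp])
    using H1 H2 acc by (auto simp: QQ_def I_def F_def T_def tp_def)
qed



definition projT :: "(nat \<times> 'a option option \<times> nat) set \<Rightarrow> (nat \<Rightarrow> nat) \<Rightarrow> (nat \<times> 'a option option \<times> nat) set" where
  "projT T tape =
     {(2*p+b, None, 2*q+b) | p q b. (p, None, q) \<in> T \<and> b \<le> 1}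
   \<union> {(2*p+b, Some c, 2*q+b) | p c q b. (p, Some c, q) \<in> T \<and> tape p \<noteq> 0 \<and> b \<le> 1}
   \<union> {(2*p, None, 2*q) | p a q. (p, Some (Some a), q) \<in> T \<and> tape p = 0}
   \<union> {(2*p, None, 2*q+1) | p q. (p, Some None, q) \<in> T \<and> tape p = 0}"

lemma projT_I1: "(p, None, q) \<in> T \<Longrightarrow> b \<le> 1 \<Longrightarrow> (2*p+b, None, 2*q+b) \<in> projT T tape"
  unfolding projT_def by (intro UnI1) auto
lemma projT_I2: "(p, Some c, q) \<in> T \<Longrightarrow> tape p \<noteq> 0 \<Longrightarrow> b \<le> 1 \<Longrightarrow> (2*p+b, Some c, 2*q+b) \<in> projT T tape"
  unfolding projT_def by (rule UnI1, rule UnI1, rule UnI2) auto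
lemma projT_I3: "(p, Some (Some a), q) \<in> T \<Longrightarrow> tape p = 0 \<Longrightarrow> (2*p, None, 2*q) \<in> projT T tape"
  unfolding projT_def by (rule UnI1, rule UnI2) auto
lemma projT_I4: "(p, Some None, q) \<in> T \<Longrightarrow> tape p = 0 \<Longrightarrow> (2*p, None, 2*q+1) \<in> projT T tape"
  unfolding projT_def by (rule UnI2) auto

lemma proj_fwd:
  assumes TA0: "T \<subseteq> UNIV \<times> ({None, Some None} \<union> Some ` Some ` A) \<times> UNIV"
  shows "wr_run (projT T tape) (\<lambda>k. tape (k div 2) - 1) ((\<lambda>q. 2*q+1) ` F) k rs \<Longrightarrow>
    (\<forall>p. k = 2*p \<longrightarrow> (\<exists>x\<in>lists A. wr_run T tape F p (add_end x # rs))) \<and>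
    (\<forall>p. k = 2*p+1 \<longrightarrow> wr_run T tape F p ([] # rs))"
proof (induction rule: wr_run.induct)
  case (fin q rs)
  then obtain x where x: "x \<in> F" "q = 2*x+1" by auto
  show ?case
  proof (intro conjI allI impI)
    fix p assume "q = 2*p" then show "\<exists>x\<in>lists A. wr_run T tape F p (add_end x # rs)" using x by presburger
  next
    fix p assume "q = 2*p+1" then have "p = x" using x by simp
    then show "wr_run T tape F p ([] # rs)" using x fin(2) by (auto intro!: wr_run.fin)
  qed
next
  case (eps q q' rs)
  from eps(1) consider
    (a) p0 q0 b where "q = 2*p0+b" "q' = 2*q0+b" "(p0, None, q0) \<in> T" "b \<le> 1"
  | (c) p0 a q0 where "q = 2*p0" "q' = 2*q0" "(p0, Some (Some a), q0) \<in> T" "tape p0 = 0"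
  | (d) p0 q0 where "q = 2*p0" "q' = 2*q0+1" "(p0, Some None, q0) \<in> T" "tape p0 = 0"
    unfolding projT_def by blast
  then show ?case
  proof cases
    case a
    show ?thesis
    proof (cases "b = 0")
      case True
      then show ?thesis using a eps(3) by (auto intro: wr_run.eps; presburger)
    next
      case False
      then have "b = 1" using a by simp
      then show ?thesis using a eps(3) by (auto intro: wr_run.eps; presburger)
    qed
  next
    case c
    have aA: "a \<in> A" using TA0 c(3) by auto
    have "\<exists>x\<in>lists A. wr_run T tape F p0 (add_end x # rs)"
    proof -
      obtain x where x: "x \<in> lists A" "wr_run T tape F q0 (add_end x # rs)" using eps(3) c by blast
      have "wr_run T tape F p0 (add_end (a # x) # rs)"
        by (rule wr_run.step[OF c(3)]) (use c x in \<open>simp_all add: add_end_def\<close>)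
      then show ?thesis using aA x(1) by (intro bexI[of _ "a # x"]) auto
    qed
    then show ?thesis using c by (auto; presburger)
  next
    case d
    have IHd: "wr_run T tape F q0 ([] # rs)" using eps(3) d by simp
    have "wr_run T tape F p0 (add_end [] # rs)"
      using wr_run.step[OF d(3), where rs="add_end [] # rs" and r="[]" and tape=tape and F=F] IHd d(4) by (simp add: add_end_def)
    then show ?thesis using d by (auto; presburger)
  qed
next
  case (step q c q' rs r)
  from step(1) obtain p0 q0 b where s: "q = 2*p0+b" "q' = 2*q0+b" "(p0, Some c, q0) \<in> T"
    "tape p0 \<noteq> 0" "b \<le> 1"
    unfolding projT_def by blast
  have dv: "q div 2 = p0" using s by auto
  have tk: "tape q0 \<noteq> 0 \<Longrightarrow> True" by simp
  define k where "k = tape p0 - 1"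
  have kk: "tape p0 = Suc k" using s(4) k_def by simp
  have k1: "k < length rs" using step(2) dv k_def by simp
  have k2: "rs ! k = c # r" using step(3) dv k_def by simp
  have upd: "(x0 # rs)[tape p0 := r] = x0 # rs[k := r]" for x0 :: "'a option list" using kk by simp
  show ?case
  proof (cases "b = 0")
    case True
    obtain x where x: "x \<in> lists A" "wr_run T tape F q0 (add_end x # rs[k := r])"
      using step(5) s True dv k_def by auto
    have "wr_run T tape F p0 (add_end x # rs)"
      by (rule wr_run.step[OF s(3)]) (use kk k1 k2 x upd in simp_all)
    then show ?thesis using s True x(1) by (auto; presburger)
  next
    case False
    then have b1: "b = 1" using s by simp
    have x: "wr_run T tape F q0 ([] # rs[k := r])"
      using step(5) s b1 dv k_def by auto
    have "wr_run T tape F p0 ([] # rs)"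
      by (rule wr_run.step[OF s(3)]) (use kk k1 k2 x upd in simp_all)
    then show ?thesis using s b1 by (auto; presburger)
  qed
qed

lemma proj_bwd:
  shows "wr_run T tape F p rs \<Longrightarrow>
    (\<forall>r0 rs'. rs = r0 # rs' \<longrightarrow>
      (r0 = [] \<longrightarrow> wr_run (projT T tape) (\<lambda>k. tape (k div 2) - 1) ((\<lambda>q. 2*q+1) ` F) (2*p+1) rs') \<and>
      (\<forall>x. r0 = add_end x \<longrightarrow> wr_run (projT T tape) (\<lambda>k. tape (k div 2) - 1) ((\<lambda>q. 2*q+1) ` F) (2*p) rs'))"
proof (induction rule: wr_run.induct)
  case (fin q rs)
  then show ?case by (auto intro!: wr_run.fin simp: add_end_def)
next
  case (eps q q' rs)
  have "(2*q+b, None, 2*q'+b) \<in> projT T tape" if "b \<le> 1" for b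
    using projT_I1[OF eps(1) that] .
  from this[of 0] this[of 1] have t0: "(2*q, None, 2*q') \<in> projT T tape"
    and t1: "(2*q+1, None, 2*q'+1) \<in> projT T tape" by simp_all
  show ?case
  proof (intro allI impI conjI)
    fix r0 rs' assume "rs = r0 # rs'" "r0 = []"
    then show "wr_run (projT T tape) (\<lambda>k. tape (k div 2) - 1) ((\<lambda>q. 2*q+1) ` F) (2*q+1) rs'"
      using eps(3) by (intro wr_run.eps[OF t1]) simp
  next
    fix r0 rs' x assume "rs = r0 # rs'" "r0 = add_end x"
    then show "wr_run (projT T tape) (\<lambda>k. tape (k div 2) - 1) ((\<lambda>q. 2*q+1) ` F) (2*q) rs'"
      using eps(3) by (intro wr_run.eps[OF t0]) blast
  qed
next
  case (step q c q' rs r)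
  show ?case
  proof (intro allI impI)
    fix r0 rs' assume rs: "rs = r0 # rs'"
    show "(r0 = [] \<longrightarrow> wr_run (projT T tape) (\<lambda>k. tape (k div 2) - 1) ((\<lambda>q. 2*q+1) ` F) (2*q+1) rs') \<and>
      (\<forall>x. r0 = add_end x \<longrightarrow> wr_run (projT T tape) (\<lambda>k. tape (k div 2) - 1) ((\<lambda>q. 2*q+1) ` F) (2*q) rs')"
    proof (cases "tape q = 0")
      case True
      have r0: "r0 = c # r" using step(3) True rs by simp
      have IH: "(r = [] \<longrightarrow> wr_run (projT T tape) (\<lambda>k. tape (k div 2) - 1) ((\<lambda>q. 2*q+1) ` F) (2*q'+1) rs') \<and>
      (\<forall>x. r = add_end x \<longrightarrow> wr_run (projT T tape) (\<lambda>k. tape (k div 2) - 1) ((\<lambda>q. 2*q+1) ` F) (2*q') rs')"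
        using step(5) True rs by simp
      show ?thesis
      proof (intro conjI allI impI)
        assume "r0 = []" then show "wr_run (projT T tape) (\<lambda>k. tape (k div 2) - 1) ((\<lambda>q. 2*q+1) ` F) (2*q+1) rs'"
          using r0 by simp
      next
        fix x assume x: "r0 = add_end x"
        show "wr_run (projT T tape) (\<lambda>k. tape (k div 2) - 1) ((\<lambda>q. 2*q+1) ` F) (2*q) rs'"
        proof (cases x)
          case Nil
          then have "c = None" "r = []" using x r0 by (auto simp: add_end_def)
          then have t: "(2*q, None, 2*q'+1) \<in> projT T tape" using projT_I4 step(1) True by metis
          show ?thesis using wr_run.eps[OF t] IH \<open>r = []\<close> by blast
        next
          case (Cons a x')
          then have "c = Some a" "r = add_end x'" using x r0 by (auto simp: add_end_def)
          then have t: "(2*q, None, 2*q') \<in> projT T tape" using projT_I3 step(1) True by metis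
          show ?thesis using wr_run.eps[OF t] IH \<open>r = add_end x'\<close> by blast
        qed
      qed
    next
      case False
      define k where "k = tape q - 1"
      have kk: "tape q = Suc k" using False k_def by simp
      have upd: "rs[tape q := r] = r0 # rs'[k := r]" using kk rs by simp
      have k1: "k < length rs'" using step(2) kk rs by simp
      have k2: "rs' ! k = c # r" using step(3) kk rs by simp
      have IH: "(r0 = [] \<longrightarrow> wr_run (projT T tape) (\<lambda>k. tape (k div 2) - 1) ((\<lambda>q. 2*q+1) ` F) (2*q'+1) (rs'[k := r])) \<and>
      (\<forall>x. r0 = add_end x \<longrightarrow> wr_run (projT T tape) (\<lambda>k. tape (k div 2) - 1) ((\<lambda>q. 2*q+1) ` F) (2*q') (rs'[k := r]))"
        using step(5) upd by simp
      have t: "(2*q+b, Some c, 2*q'+b) \<in> projT T tape" if "b \<le> 1" for b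
        using projT_I2[where tape=tape, OF step(1) False that] .
      have tp: "(\<lambda>k. tape (k div 2) - 1) (2*q+b) = k" if "b \<le> 1" for b
        using that k_def by auto
      have s0: "wr_run (projT T tape) (\<lambda>k. tape (k div 2) - 1) ((\<lambda>q. 2*q+1) ` F) (2*q) rs'"
        if "wr_run (projT T tape) (\<lambda>k. tape (k div 2) - 1) ((\<lambda>q. 2*q+1) ` F) (2*q') (rs'[k := r])"
        using wr_run.step[OF t[of 0], where tape="\<lambda>k. tape (k div 2) - 1" and rs=rs' and r=r] tp[of 0] k1 k2 that
        by simp
      have s1: "wr_run (projT T tape) (\<lambda>k. tape (k div 2) - 1) ((\<lambda>q. 2*q+1) ` F) (2*q+1) rs'"
        if "wr_run (projT T tape) (\<lambda>k. tape (k div 2) - 1) ((\<lambda>q. 2*q+1) ` F) (2*q'+1) (rs'[k := r])"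
        using wr_run.step[OF t[of 1], where tape="\<lambda>k. tape (k div 2) - 1" and rs=rs' and r=r] tp[of 1] k1 k2 that
        by simp
      show ?thesis using IH s0 s1 by blast
    qed
  qed
qed

lemma tuples_Cons: "x # xs \<in> tuples A (Suc m) \<longleftrightarrow> x \<in> lists A \<and> xs \<in> tuples A m"
  by (auto simp: tuples_def)

lemma wr_proj:
  assumes n: "n \<ge> 2" and P: "weakly_regular A n P"
  shows "weakly_regular A (n - 1) {xs. \<exists>x1 \<in> lists A. x1 # xs \<in> P}"
proof -
  obtain Q I F T tape where H: "finite Q" "I \<subseteq> Q" "F \<subseteq> Q"
    "T \<subseteq> Q \<times> ({None, Some None} \<union> Some ` Some ` A) \<times> Q" "\<forall>q\<in>Q. tape q < n"
    "P = {ws \<in> tuples A n. wr_accepts I T tape F ws}"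
    using P unfolding weakly_regular_def by blast
  have TA: "T \<subseteq> UNIV \<times> ({None, Some None} \<union> Some ` Some ` A) \<times> UNIV" using H(4) by blast
  define T' where "T' = projT T tape"
  define tp where "tp = (\<lambda>k. tape (k div 2) - (1::nat))"
  define F' where "F' = (\<lambda>q. 2*q+1) ` F"
  define I' where "I' = (\<lambda>q. 2*q) ` I"
  define Q' where "Q' = (\<lambda>q. 2*q) ` Q \<union> (\<lambda>q. 2*q+1) ` Q"
  have nS: "n = Suc (n - 1)" using n by simp
  have hQ: "2*p+b \<in> Q'" if "p \<in> Q" "b \<le> 1" for p b
  proof (cases "b = 0")
    case True then show ?thesis using that unfolding Q'_def by auto
  next
    case False then have "b = 1" using that by simp
    then show ?thesis using that unfolding Q'_def by auto
  qed
  have hQ0: "2*p \<in> Q'" if "p \<in> Q" for p using hQ[OF that, of 0] by simp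
  have hQ1: "Suc (2*p) \<in> Q'" if "p \<in> Q" for p using hQ[OF that, of 1] by simp
  have eq: "{xs. \<exists>x1 \<in> lists A. x1 # xs \<in> P} = {xs \<in> tuples A (n - 1). wr_accepts I' T' tp F' xs}"
  proof (intro set_eqI iffI)
    fix xs assume "xs \<in> {xs. \<exists>x1 \<in> lists A. x1 # xs \<in> P}"
    then obtain x1 where x1: "x1 \<in> lists A" "x1 # xs \<in> P" by blast
    then have xs: "xs \<in> tuples A (n - 1)" using H(6) nS tuples_Cons[of x1 xs A "n - 1"] by auto
    obtain q where q: "q \<in> I" "wr_run T tape F q (add_end x1 # map add_end xs)"
      using x1 H(6) unfolding wr_accepts_def by auto
    have "wr_run T' tp F' (2*q) (map add_end xs)"
      using proj_bwd[OF q(2)] unfolding T'_def tp_def F'_def by blast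
    then show "xs \<in> {xs \<in> tuples A (n - 1). wr_accepts I' T' tp F' xs}"
      using xs q(1) unfolding wr_accepts_def I'_def by auto
  next
    fix xs assume "xs \<in> {xs \<in> tuples A (n - 1). wr_accepts I' T' tp F' xs}"
    then obtain q where xs: "xs \<in> tuples A (n - 1)" and q: "q \<in> I" "wr_run T' tp F' (2*q) (map add_end xs)"
      unfolding wr_accepts_def I'_def by auto
    obtain x where x: "x \<in> lists A" "wr_run T tape F q (add_end x # map add_end xs)"
      using proj_fwd[OF TA q(2)[unfolded T'_def tp_def F'_def]] by blast
    have "x # xs \<in> P" using H(6) x xs q(1) nS tuples_Cons[of x xs A "n - 1"]
      unfolding wr_accepts_def by auto
    then show "xs \<in> {xs. \<exists>x1 \<in> lists A. x1 # xs \<in> P}" using x(1) by blast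
  qed
  show ?thesis
    unfolding eq weakly_regular_def
    apply (rule exI[of _ Q'], rule exI[of _ I'], rule exI[of _ F'], rule exI[of _ T'], rule exI[of _ tp])
  proof (intro conjI ballI)
    show "finite Q'" using H(1) unfolding Q'_def by simp
    show "I' \<subseteq> Q'" using H(2) unfolding Q'_def I'_def by auto
    show "F' \<subseteq> Q'" using H(3) unfolding Q'_def F'_def by auto
    show "T' \<subseteq> Q' \<times> ({None, Some None} \<union> Some ` Some ` A) \<times> Q'"
    proof
      fix t assume "t \<in> T'"
      then show "t \<in> Q' \<times> ({None, Some None} \<union> Some ` Some ` A) \<times> Q'"
        unfolding T'_def projT_def
        by (elim UnE CollectE exE conjE; use H(4) in \<open>auto intro!: hQ hQ0 hQ1\<close>)
    qed
    fix q assume "q \<in> Q'"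
    then have "q div 2 \<in> Q" unfolding Q'_def by auto
    then show "tp q < n - 1" using H(5) n unfolding tp_def by fastforce
  qed simp
qed



fun wfw :: "'a option list \<Rightarrow> bool" where
  "wfw [] = False" | "wfw (None # r) = (r = [])" | "wfw (Some a # r) = wfw r"

lemma wfw_add_end[simp]: "wfw (add_end x)" by (induct x) (auto simp: add_end_def)
lemma count_add_end[simp]: "count_list (add_end x) (Some b) = count_list x b"
  by (induct x) (auto simp: add_end_def)
lemma length_add_end[simp]: "length (add_end x) = Suc (length x)" by (simp add: add_end_def)
lemma add_end_Cons: "add_end (a # x) = Some a # add_end x" by (simp add: add_end_def)
lemma add_end_Nil: "add_end [] = [None]" by (simp add: add_end_def)

lemma stepI: "(q, Some c, q') \<in> T \<Longrightarrow> tape q = k \<Longrightarrow> k < length rs \<Longrightarrow> rs ! k = c # r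
   \<Longrightarrow> wr_run T tape F q' (rs[k := r]) \<Longrightarrow> wr_run T tape F q rs"
  by (metis wr_run.step)

definition blkT :: "'a set \<Rightarrow> 'a \<Rightarrow> nat \<Rightarrow> (nat \<times> 'a option option \<times> nat) set" where
  "blkT A b s = {(s, Some (Some b), s+1)} \<union> {(s, Some (Some a), s) | a. a \<in> A \<and> a \<noteq> b}
     \<union> {(s, Some None, s+2)} \<union> {(s+1, Some (Some a), s) | a. a \<in> A} \<union> {(s+2, Some None, s+3)}"

definition emp :: "nat \<Rightarrow> nat \<Rightarrow> 'a list list \<Rightarrow> bool" where
  "emp t0 t1 rs \<longleftrightarrow> (\<forall>k<length rs. k \<noteq> t0 \<longrightarrow> k \<noteq> t1 \<longrightarrow> rs ! k = [])"

lemma emp_upd[simp]: "k = t0 \<or> k = t1 \<Longrightarrow> emp t0 t1 (rs[k := r]) = emp t0 t1 rs"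
  unfolding emp_def by (auto simp: nth_list_update)

definition binv :: "nat \<Rightarrow> 'a \<Rightarrow> nat \<Rightarrow> nat \<Rightarrow> nat \<Rightarrow> 'a option list list \<Rightarrow> bool" where
  "binv s b t0 t1 q rs \<longleftrightarrow> emp t0 t1 rs \<and>
     (if q = s then wfw (rs ! t0) \<and> wfw (rs ! t1) \<and> Suc (count_list (rs ! t0) (Some b)) = length (rs ! t1)
      else if q = s + 1 then wfw (rs ! t0) \<and> wfw (rs ! t1) \<and> Suc (Suc (count_list (rs ! t0) (Some b))) = length (rs ! t1)
      else if q = s + 2 then rs ! t0 = [] \<and> rs ! t1 = [None]
      else rs ! t0 = [] \<and> rs ! t1 = [])"

lemma blk_sound:
  assumes TT: "\<And>q c q'. (q, c, q') \<in> T \<Longrightarrow> s \<le> q \<Longrightarrow> q \<le> s+3 \<Longrightarrow> (q, c, q') \<in> blkT A b s"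
  and tp: "tape s = t0" "tape (s+1) = t1" "tape (s+2) = t1"
  and FF: "\<And>q. s \<le> q \<Longrightarrow> q \<le> s+3 \<Longrightarrow> q \<in> F \<longleftrightarrow> q = s+3"
  and t01: "t0 \<noteq> t1"
  shows "wr_run T tape F q rs \<Longrightarrow> t0 < length rs \<Longrightarrow> t1 < length rs \<Longrightarrow> s \<le> q \<Longrightarrow> q \<le> s+3
     \<Longrightarrow> binv s b t0 t1 q rs"
proof (induction rule: wr_run.induct)
  case (fin q rs)
  then have "q = s + 3" using FF by blast
  then show ?case using fin by (auto simp: binv_def emp_def)
next
  case (eps q q' rs)
  then show ?case using TT[OF eps(1)] by (auto simp: blkT_def)
next
  case (step q c q' rs r)
  have tr: "(q, Some c, q') \<in> blkT A b s" using TT step by blast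
  from tr consider
      (a) "q = s" "c = Some b" "q' = s+1"
    | (b) a where "q = s" "c = Some a" "q' = s" "a \<noteq> b"
    | (c) "q = s" "c = None" "q' = s+2"
    | (d) a where "q = s+1" "c = Some a" "q' = s"
    | (e) "q = s+2" "c = None" "q' = s+3"
    unfolding blkT_def by blast
  then show ?case
  proof cases
    case a
    have IH: "binv s b t0 t1 (s+1) (rs[t0 := r])" using step a tp by simp
    then show ?thesis using step a tp t01 by (simp add: binv_def)
  next
    case b
    have IH: "binv s b t0 t1 s (rs[t0 := r])" using step b tp by simp
    then show ?thesis using step b tp t01 by (simp add: binv_def)
  next
    case c
    have IH: "binv s b t0 t1 (s+2) (rs[t0 := r])" using step c tp by simp
    then show ?thesis using step c tp t01 by (simp add: binv_def)
  next
    case d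
    have IH: "binv s b t0 t1 s (rs[t1 := r])" using step d tp by simp
    then show ?thesis using step d tp t01 by (simp add: binv_def)
  next
    case e
    have IH: "binv s b t0 t1 (s+3) (rs[t1 := r])" using step e tp by simp
    then show ?thesis using step e tp t01 by (simp add: binv_def)
  qed
qed

lemma blk_comp:
  assumes TT: "blkT A b s \<subseteq> T"
  and tp: "tape s = t0" "tape (s+1) = t1" "tape (s+2) = t1"
  and FF: "s + 3 \<in> F"
  and t01: "t0 \<noteq> t1"
  shows "x \<in> lists A \<Longrightarrow> y \<in> lists A \<Longrightarrow> count_list x b = length y \<Longrightarrow> t0 < length rs \<Longrightarrow> t1 < length rs
     \<Longrightarrow> rs ! t0 = add_end x \<Longrightarrow> rs ! t1 = add_end y \<Longrightarrow> (\<forall>k<length rs. k \<noteq> t0 \<longrightarrow> k \<noteq> t1 \<longrightarrow> rs ! k = [])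
     \<Longrightarrow> wr_run T tape F s rs"
proof (induction x arbitrary: y rs)
  case Nil
  then have y: "y = []" by simp
  have tt: "(s, Some None, s+2) \<in> T" "(s+2, Some None, s+3) \<in> T" using TT unfolding blkT_def by auto
  have fi: "wr_run T tape F (s+3) ((rs[t0 := [] ])[t1 := [] ])"
    apply (rule wr_run.fin[OF FF])
    using Nil by (auto simp: set_conv_nth nth_list_update)
  have "wr_run T tape F (s+2) (rs[t0 := []])"
    by (rule stepI[where tape=tape, OF tt(2) tp(3)]) (use Nil y fi t01 in \<open>simp_all add: add_end_def\<close>)
  then show ?case
    by (rule stepI[where tape=tape, OF tt(1) tp(1), rotated 2]) (use Nil in \<open>simp_all add: add_end_def\<close>)
next
  case (Cons a x)
  show ?case
  proof (cases "a = b")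
    case True
    then obtain d y' where y: "y = d # y'" using Cons.prems by (cases y) auto
    have t: "(s, Some (Some b), s+1) \<in> T" "(s+1, Some (Some d), s) \<in> T"
      using TT Cons.prems y unfolding blkT_def by auto
    have "wr_run T tape F s (rs[t0 := add_end x, t1 := add_end y'])"
      by (rule Cons.IH[of y']) (use Cons.prems y True t01 in \<open>auto simp: nth_list_update\<close>)
    then have "wr_run T tape F (s+1) (rs[t0 := add_end x])"
      by (rule stepI[where tape=tape, OF t(2) tp(2), rotated 2]) (use Cons.prems y t01 in \<open>simp_all add: add_end_Cons\<close>)
    then show ?thesis
      by (rule stepI[where tape=tape, OF t(1) tp(1), rotated 2]) (use Cons.prems True in \<open>simp_all add: add_end_Cons\<close>)
  next
    case False
    have t: "(s, Some (Some a), s) \<in> T" using TT Cons.prems False unfolding blkT_def by auto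
    have "wr_run T tape F s (rs[t0 := add_end x])"
      by (rule Cons.IH[of y]) (use Cons.prems False t01 in \<open>auto simp: nth_list_update\<close>)
    then show ?thesis
      by (rule stepI[where tape=tape, OF t tp(1), rotated 2]) (use Cons.prems in \<open>simp_all add: add_end_Cons\<close>)
  qed
qed



definition compT :: "'a set \<Rightarrow> 'a \<Rightarrow> (nat \<times> 'a option option \<times> nat) set" where
  "compT A b = {(0, Some (Some b), 1)} \<union> {(0, Some (Some a), 0) | a. a \<in> A \<and> a \<noteq> b}
    \<union> {(0, Some None, 2)} \<union> {(1, Some (Some a), 0) | a. a \<in> A} \<union> {(1, Some None, 4)}
    \<union> {(2, Some (Some a), 3) | a. a \<in> A} \<union> {(3, Some (Some a), 3) | a. a \<in> A} \<union> {(3, Some None, 5)}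
    \<union> {(4, Some (Some a), 4) | a. a \<in> A} \<union> {(4, Some None, 5)}"

definition ctape :: "nat \<Rightarrow> nat" where "ctape q = (if q = 1 \<or> q = 2 \<or> q = 3 then 1 else 0)"

definition cinv :: "'a \<Rightarrow> nat \<Rightarrow> 'a option list \<Rightarrow> 'a option list \<Rightarrow> bool" where
  "cinv b q r0 r1 =
   (if q = 0 then wfw r0 \<and> wfw r1 \<and> Suc (count_list r0 (Some b)) \<noteq> length r1
    else if q = 1 then wfw r0 \<and> wfw r1 \<and> Suc (Suc (count_list r0 (Some b))) \<noteq> length r1
    else if q = 2 then r0 = [] \<and> wfw r1 \<and> 2 \<le> length r1
    else if q = 3 then r0 = [] \<and> wfw r1
    else if q = 4 then wfw r0 \<and> r1 = []
    else r0 = [] \<and> r1 = [])"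

lemma ctape_simps[simp]: "ctape 0 = 0" "ctape 1 = 1" "ctape (Suc 0) = 1" "ctape 2 = 1" "ctape 3 = 1" "ctape 4 = 0"
  unfolding ctape_def by simp_all

lemma wfw_len: "wfw r \<Longrightarrow> 1 \<le> length r" by (cases r) auto

lemma comp_sound:
  "wr_run (compT A b) ctape {5} q rs \<Longrightarrow> \<forall>r0 r1. rs = [r0, r1] \<longrightarrow> cinv b q r0 r1"
proof (induction rule: wr_run.induct)
  case (fin q rs)
  then show ?case by (auto simp: cinv_def)
next
  case (eps q q' rs)
  then show ?case by (auto simp: compT_def)
next
  case (step q c q' rs r)
  show ?case
  proof (intro allI impI)
    fix r0 r1 assume rs: "rs = [r0, r1]"
    from step(1) consider
        (a) "q = 0" "c = Some b" "q' = 1"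
      | (b) a where "q = 0" "c = Some a" "q' = 0" "a \<noteq> b"
      | (c) "q = 0" "c = None" "q' = 2"
      | (d) a where "q = 1" "c = Some a" "q' = 0"
      | (e) "q = 1" "c = None" "q' = 4"
      | (f) a where "q = 2" "c = Some a" "q' = 3"
      | (g) a where "q = 3" "c = Some a" "q' = 3"
      | (h) "q = 3" "c = None" "q' = 5"
      | (i) a where "q = 4" "c = Some a" "q' = 4"
      | (j) "q = 4" "c = None" "q' = 5"
      by (auto simp: compT_def)
    then show "cinv b q r0 r1"
    proof cases
      case a
      then have "r0 = c # r" "cinv b q' r r1" using step rs by (simp_all)
      then show ?thesis using a by (auto simp: cinv_def)
    next
      case b
      then have "r0 = c # r" "cinv b q' r r1" using step rs by (simp_all)
      then show ?thesis using b by (auto simp: cinv_def)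
    next
      case c
      then have "r0 = c # r" "cinv b q' r r1" using step rs by (simp_all)
      then show ?thesis using c by (auto simp: cinv_def dest: wfw_len)
    next
      case d
      then have "r1 = c # r" "cinv b q' r0 r" using step rs by (simp_all)
      then show ?thesis using d by (auto simp: cinv_def)
    next
      case e
      then have "r1 = c # r" "cinv b q' r0 r" using step rs by (simp_all)
      then show ?thesis using e by (auto simp: cinv_def)
    next
      case f
      then have "r1 = c # r" "cinv b q' r0 r" using step rs by (simp_all)
      then show ?thesis using f by (auto simp: cinv_def dest: wfw_len)
    next
      case g
      then have "r1 = c # r" "cinv b q' r0 r" using step rs by (simp_all)
      then show ?thesis using g by (auto simp: cinv_def)
    next
      case h
      then have "r1 = c # r" "cinv b q' r0 r" using step rs by (simp_all)
      then show ?thesis using h by (auto simp: cinv_def)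
    next
      case i
      then have "r0 = c # r" "cinv b q' r r1" using step rs by (simp_all)
      then show ?thesis using i by (auto simp: cinv_def)
    next
      case j
      then have "r0 = c # r" "cinv b q' r r1" using step rs by (simp_all)
      then show ?thesis using j by (auto simp: cinv_def)
    qed
  qed
qed

lemma comp3: "y \<in> lists A \<Longrightarrow> wr_run (compT A b) ctape {5} 3 [[], add_end y]"
proof (induction y)
  case Nil
  have t: "(3, Some None, 5) \<in> compT A b" unfolding compT_def by simp
  show ?case
    by (rule stepI[where tape=ctape and k=1 and r="[]", OF t]) (auto simp: add_end_def intro: wr_run.fin)
next
  case (Cons a y)
  have t: "(3, Some (Some a), 3) \<in> compT A b" using Cons.prems unfolding compT_def by simp
  show ?case
    by (rule stepI[where tape=ctape and k=1 and r="add_end y", OF t]) (use Cons in \<open>auto simp: add_end_Cons\<close>)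
qed

lemma comp4: "x \<in> lists A \<Longrightarrow> wr_run (compT A b) ctape {5} 4 [add_end x, []]"
proof (induction x)
  case Nil
  have t: "(4, Some None, 5) \<in> compT A b" unfolding compT_def by simp
  show ?case
    by (rule stepI[where tape=ctape and k=0 and r="[]", OF t]) (auto simp: add_end_def intro: wr_run.fin)
next
  case (Cons a x)
  have t: "(4, Some (Some a), 4) \<in> compT A b" using Cons.prems unfolding compT_def by simp
  show ?case
    by (rule stepI[where tape=ctape and k=0 and r="add_end x", OF t]) (use Cons in \<open>auto simp: add_end_Cons\<close>)
qed

lemma comp0: "x \<in> lists A \<Longrightarrow> y \<in> lists A \<Longrightarrow> count_list x b \<noteq> length y
  \<Longrightarrow> wr_run (compT A b) ctape {5} 0 [add_end x, add_end y]"
proof (induction x arbitrary: y)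
  case Nil
  then obtain d y' where y: "y = d # y'" by (cases y) auto
  have t: "(0, Some None, 2) \<in> compT A b" "(2, Some (Some d), 3) \<in> compT A b"
    using Nil y unfolding compT_def by simp_all
  have hh1: "wr_run (compT A b) ctape {5} 2 [[], add_end y]"
    by (rule stepI[where tape=ctape and k=1 and r="add_end y'", OF t(2)]) (use Nil y comp3[of y' A b] in \<open>auto simp: add_end_Cons\<close>)
  show ?case
    by (rule stepI[where tape=ctape and k=0 and r="[]", OF t(1)]) (use hh1 in \<open>auto simp: add_end_def\<close>)
next
  case (Cons a x)
  show ?case
  proof (cases "a = b")
    case True
    show ?thesis
    proof (cases y)
      case Nil
      have t: "(0, Some (Some b), 1) \<in> compT A b" "(1, Some None, 4) \<in> compT A b"
        unfolding compT_def by simp_all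
      have hh2: "wr_run (compT A b) ctape {5} 1 [add_end x, add_end y]"
        by (rule stepI[where tape=ctape and k=1 and r="[]", OF t(2)]) (use Cons Nil comp4[of x A b] in \<open>auto simp: add_end_def\<close>)
      show ?thesis
        by (rule stepI[where tape=ctape and k=0 and r="add_end x", OF t(1)]) (use hh2 True in \<open>auto simp: add_end_Cons\<close>)
    next
      case Cons2: (Cons d y')
      have t: "(0, Some (Some b), 1) \<in> compT A b" "(1, Some (Some d), 0) \<in> compT A b"
        using Cons.prems Cons2 unfolding compT_def by simp_all
      have hh3: "wr_run (compT A b) ctape {5} 0 [add_end x, add_end y']"
        using Cons Cons2 True by auto
      have hh4: "wr_run (compT A b) ctape {5} 1 [add_end x, add_end y]"
        by (rule stepI[where tape=ctape and k=1 and r="add_end y'", OF t(2)]) (use hh3 Cons2 in \<open>auto simp: add_end_Cons\<close>)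
      show ?thesis
        by (rule stepI[where tape=ctape and k=0 and r="add_end x", OF t(1)]) (use hh4 True in \<open>auto simp: add_end_Cons\<close>)
    qed
  next
    case False
    have t: "(0, Some (Some a), 0) \<in> compT A b" using Cons.prems False unfolding compT_def by simp
    have hh5: "wr_run (compT A b) ctape {5} 0 [add_end x, add_end y]"
      using Cons False by auto
    show ?thesis
      by (rule stepI[where tape=ctape and k=0 and r="add_end x", OF t]) (use hh5 in \<open>auto simp: add_end_Cons\<close>)
  qed
qed

lemma tuples2': "ws \<in> tuples A 2 \<longleftrightarrow> (\<exists>x y. ws = [x, y] \<and> x \<in> lists A \<and> y \<in> lists A)"
proof
  assume "ws \<in> tuples A 2"
  then have "length ws = 2" "\<forall>w\<in>set ws. w \<in> lists A" by (auto simp: tuples_def)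
  then show "\<exists>x y. ws = [x, y] \<and> x \<in> lists A \<and> y \<in> lists A"
    by (cases ws; cases "tl ws") auto
qed (auto simp: tuples_def)

lemma wr_comp:
  assumes bA: "b \<in> A"
  shows "weakly_regular A 2 {ws \<in> tuples A 2. \<exists>x y. ws = [x, y] \<and> count_list x b \<noteq> length y}"
  unfolding weakly_regular_def
proof (rule exI[of _ "{0..5}"], rule exI[of _ "{0}"], rule exI[of _ "{5}"], rule exI[of _ "compT A b"],
    rule exI[of _ ctape], intro conjI)
  show "compT A b \<subseteq> {0..5} \<times> ({None, Some None} \<union> Some ` Some ` A) \<times> {0..5}"
    using bA unfolding compT_def by auto
  show "\<forall>q\<in>{0..5}. ctape q < 2" by (auto simp: ctape_def)
  show "{ws \<in> tuples A 2. \<exists>x y. ws = [x, y] \<and> count_list x b \<noteq> length y} =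
    {ws \<in> tuples A 2. wr_accepts {0} (compT A b) ctape {5} ws}"
  proof (intro set_eqI iffI)
    fix ws assume "ws \<in> {ws \<in> tuples A 2. \<exists>x y. ws = [x, y] \<and> count_list x b \<noteq> length y}"
    then obtain x y where "ws = [x, y]" "x \<in> lists A" "y \<in> lists A" "count_list x b \<noteq> length y" "ws \<in> tuples A 2"
      by (auto simp: tuples2')
    then show "ws \<in> {ws \<in> tuples A 2. wr_accepts {0} (compT A b) ctape {5} ws}"
      using comp0[of x A y b] by (auto simp: wr_accepts_def)
  next
    fix ws assume a: "ws \<in> {ws \<in> tuples A 2. wr_accepts {0} (compT A b) ctape {5} ws}"
    then have wt: "ws \<in> tuples A 2" by blast
    then obtain x y where ws: "ws = [x, y]" by (auto simp: tuples2')
    have r: "wr_run (compT A b) ctape {5} 0 [add_end x, add_end y]"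
      using a ws by (auto simp: wr_accepts_def)
    have "cinv b 0 (add_end x) (add_end y)" using comp_sound[OF r] by simp
    then show "ws \<in> {ws \<in> tuples A 2. \<exists>x y. ws = [x, y] \<and> count_list x b \<noteq> length y}"
      using ws wt by (auto simp: cinv_def)
  qed
qed auto



lemma tuples3: "ws \<in> tuples A 3 \<longleftrightarrow> (\<exists>z x y. ws = [z, x, y] \<and> z \<in> lists A \<and> x \<in> lists A \<and> y \<in> lists A)"
proof
  assume "ws \<in> tuples A 3"
  then have "length ws = 3" "\<forall>w\<in>set ws. w \<in> lists A" by (auto simp: tuples_def)
  then show "\<exists>z x y. ws = [z, x, y] \<and> z \<in> lists A \<and> x \<in> lists A \<and> y \<in> lists A"
    by (cases ws; cases "tl ws"; cases "tl (tl ws)") auto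
qed (auto simp: tuples_def)

lemma tuples2'': "ws \<in> tuples A 2 \<longleftrightarrow> (\<exists>x y. ws = [x, y] \<and> x \<in> lists A \<and> y \<in> lists A)"
proof
  assume "ws \<in> tuples A 2"
  then have "length ws = 2" "\<forall>w\<in>set ws. w \<in> lists A" by (auto simp: tuples_def)
  then show "\<exists>x y. ws = [x, y] \<and> x \<in> lists A \<and> y \<in> lists A"
    by (cases ws; cases "tl ws") auto
qed (auto simp: tuples_def)

definition btape :: "nat \<Rightarrow> nat" where "btape q = (if q = 1 \<or> q = 2 then 1 else 0)"

lemma wr_blk:
  assumes bA: "b \<in> A"
  shows "weakly_regular A 2 {ws \<in> tuples A 2. \<exists>x y. ws = [x, y] \<and> count_list x b = length y}"
  unfolding weakly_regular_def
proof (rule exI[of _ "{0..3}"], rule exI[of _ "{0}"], rule exI[of _ "{3}"], rule exI[of _ "blkT A b 0"],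
    rule exI[of _ btape], intro conjI)
  show "blkT A b 0 \<subseteq> {0..3} \<times> ({None, Some None} \<union> Some ` Some ` A) \<times> {0..3}"
    using bA unfolding blkT_def by auto
  show "\<forall>q\<in>{0..3}. btape q < 2" by (auto simp: btape_def)
  have tp: "btape 0 = 0" "btape (0+1) = 1" "btape (0+2) = 1" by (auto simp: btape_def)
  have TT: "\<And>(q::nat) c q'. (q,c,q') \<in> blkT A b 0 \<Longrightarrow> 0 \<le> q \<Longrightarrow> q \<le> 0+3 \<Longrightarrow> (q,c,q') \<in> blkT A b 0" by simp
  have FF: "\<And>q::nat. 0 \<le> q \<Longrightarrow> q \<le> 0+3 \<Longrightarrow> q \<in> {3} \<longleftrightarrow> q = 0+3" by simp
  have FF3: "0 + 3 \<in> {3::nat}" by simp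
  have t01: "(0::nat) \<noteq> 1" by simp
  show "{ws \<in> tuples A 2. \<exists>x y. ws = [x, y] \<and> count_list x b = length y} =
    {ws \<in> tuples A 2. wr_accepts {0} (blkT A b 0) btape {3} ws}"
  proof (intro set_eqI iffI)
    fix ws assume "ws \<in> {ws \<in> tuples A 2. \<exists>x y. ws = [x, y] \<and> count_list x b = length y}"
    then obtain x y where ws: "ws = [x, y]" "x \<in> lists A" "y \<in> lists A" "count_list x b = length y" "ws \<in> tuples A 2"
      by (auto simp: tuples2'')
    have "wr_run (blkT A b 0) btape {3} 0 [add_end x, add_end y]"
      by (rule blk_comp[OF subset_refl tp FF3 t01]) (use ws in \<open>auto simp: emp_def\<close>)
    then show "ws \<in> {ws \<in> tuples A 2. wr_accepts {0} (blkT A b 0) btape {3} ws}"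
      using ws by (auto simp: wr_accepts_def)
  next
    fix ws assume a: "ws \<in> {ws \<in> tuples A 2. wr_accepts {0} (blkT A b 0) btape {3} ws}"
    then have wt: "ws \<in> tuples A 2" by blast
    then obtain x y where ws: "ws = [x, y]" by (auto simp: tuples2'')
    have r: "wr_run (blkT A b 0) btape {3} 0 [add_end x, add_end y]"
      using a ws by (auto simp: wr_accepts_def)
    have "binv 0 b 0 1 0 [add_end x, add_end y]"
      using blk_sound[OF TT tp FF t01 r] by simp
    then show "ws \<in> {ws \<in> tuples A 2. \<exists>x y. ws = [x, y] \<and> count_list x b = length y}"
      using ws wt by (auto simp: binv_def)
  qed
qed auto

definition eT :: "nat set \<Rightarrow> (nat \<times> nat option option \<times> nat) set" where
  "eT A = {(0, Some None, 2)} \<union> {(0, Some (Some a), 1) | a. a \<in> A} \<union> {(1, Some (Some a), 1) | a. a \<in> A}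
     \<union> {(1, Some None, 6)} \<union> blkT A 0 2 \<union> blkT A 1 6"

definition etape :: "nat \<Rightarrow> nat" where
  "etape q = (if q \<le> 1 then 0 else if q = 2 \<or> q = 5 \<or> q = 6 \<or> q = 9 then 1 else 2)"

definition RR :: "nat \<Rightarrow> nat option list list \<Rightarrow> bool" where
  "RR b rs \<longleftrightarrow> wfw (rs ! 1) \<and> wfw (rs ! 2) \<and> Suc (count_list (rs ! 1) (Some b)) = length (rs ! 2)"

lemma etp: "etape 0 = 0" "etape 1 = 0" "etape (Suc 0) = 0"
  "etape (2::nat) = 1" "etape (2+1) = 2" "etape (2+2) = 2"
  "etape (6::nat) = 1" "etape (6+1) = 2" "etape (6+2) = 2"
  by (auto simp: etape_def)

lemma eT_blk0: "(q, c, q') \<in> eT A \<Longrightarrow> 2 \<le> q \<Longrightarrow> q \<le> 2 + 3 \<Longrightarrow> (q, c, q') \<in> blkT A 0 2"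
  unfolding eT_def blkT_def by auto
lemma eT_blk1: "(q, c, q') \<in> eT A \<Longrightarrow> 6 \<le> q \<Longrightarrow> q \<le> 6 + 3 \<Longrightarrow> (q, c, q') \<in> blkT A 1 6"
  unfolding eT_def blkT_def by auto

lemma e_blk0: "wr_run (eT A) etape {5, 9} 2 rs \<Longrightarrow> length rs = 3 \<Longrightarrow> binv 2 0 1 2 2 rs"
  by (rule blk_sound[where T="eT A" and A=A and tape=etape and F="{5,9}", OF eT_blk0 etp(4,5,6)]) auto
lemma e_blk1: "wr_run (eT A) etape {5, 9} 6 rs \<Longrightarrow> length rs = 3 \<Longrightarrow> binv 6 1 1 2 6 rs"
  by (rule blk_sound[where T="eT A" and A=A and tape=etape and F="{5,9}", OF eT_blk1 etp(7,8,9)]) auto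

lemma e_sound:
  "wr_run (eT A) etape {5, 9} q rs \<Longrightarrow> length rs = 3 \<Longrightarrow>
    (q = 0 \<longrightarrow> (rs ! 0 = [None] \<and> RR 0 rs) \<or> (wfw (rs ! 0) \<and> rs ! 0 \<noteq> [None] \<and> RR 1 rs)) \<and>
    (q = 1 \<longrightarrow> wfw (rs ! 0) \<and> RR 1 rs)"
proof (induction rule: wr_run.induct)
  case (fin q rs)
  then show ?case by auto
next
  case (eps q q' rs)
  then show ?case by (auto simp: eT_def blkT_def)
next
  case (step q c q' rs r)
  have upd1: "(rs[0 := r]) ! 1 = rs ! 1" "(rs[0 := r]) ! 2 = rs ! 2" "(rs[0 := r]) ! 0 = r"
    using step by auto
  show ?case
  proof (rule conjI; intro impI)
    assume q0: "q = 0"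
    have tq: "etape q = 0" using q0 etp by simp
    from step(1) q0 consider (a) "c = None" "q' = 2" | (b) a where "c = Some a" "q' = 1"
      by (auto simp: eT_def blkT_def)
    then show "(rs ! 0 = [None] \<and> RR 0 rs) \<or> (wfw (rs ! 0) \<and> rs ! 0 \<noteq> [None] \<and> RR 1 rs)"
    proof cases
      case a
      have "binv 2 0 1 2 2 (rs[0 := r])" using e_blk0 step a tq by simp
      then have "r = []" "RR 0 rs" using upd1 step(6) unfolding binv_def emp_def RR_def
        by (auto dest: spec[of _ 0])
      then show ?thesis using step(3) a tq by simp
    next
      case b
      have "wfw r \<and> RR 1 (rs[0 := r])" using step b tq by simp
      then show ?thesis using step(3) b tq upd1 by (auto simp: RR_def)
    qed
  next
    assume q1: "q = 1"
    have tq: "etape q = 0" using q1 etp by simp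
    from step(1) q1 consider (a) "c = None" "q' = 6" | (b) a where "c = Some a" "q' = 1"
      by (auto simp: eT_def blkT_def)
    then show "wfw (rs ! 0) \<and> RR 1 rs"
    proof cases
      case a
      have "binv 6 1 1 2 6 (rs[0 := r])" using e_blk1 step a tq by simp
      then have "r = []" "RR 1 rs" using upd1 step(6) unfolding binv_def emp_def RR_def
        by (auto dest: spec[of _ 0])
      then show ?thesis using step(3) a tq by simp
    next
      case b
      have "wfw r \<and> RR 1 (rs[0 := r])" using step b tq by simp
      then show ?thesis using step(3) b tq upd1 by (auto simp: RR_def)
    qed
  qed
qed



lemma e1: "z \<in> lists A \<Longrightarrow> x \<in> lists A \<Longrightarrow> y \<in> lists A \<Longrightarrow> count_list x 1 = length y
  \<Longrightarrow> wr_run (eT A) etape {5, 9} 1 [add_end z, add_end x, add_end y]"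
proof (induction z)
  case Nil
  have t: "(1, Some None, 6) \<in> eT A" unfolding eT_def by simp
  have sub: "blkT A 1 6 \<subseteq> eT A" unfolding eT_def by blast
  have hh: "wr_run (eT A) etape {5, 9} 6 [[], add_end x, add_end y]"
    by (rule blk_comp[OF sub etp(7,8,9), where x=x and y=y]) (use Nil in \<open>auto simp: emp_def nth_Cons'\<close>)
  show ?case
    by (rule stepI[where tape=etape and k=0 and r="[]", OF t]) (use hh in \<open>auto simp: etp add_end_def\<close>)
next
  case (Cons a z)
  have t: "(1, Some (Some a), 1) \<in> eT A" using Cons.prems unfolding eT_def by simp
  have hh: "wr_run (eT A) etape {5, 9} 1 [add_end z, add_end x, add_end y]" using Cons by simp
  show ?case
    by (rule stepI[where tape=etape and k=0 and r="add_end z", OF t]) (use hh in \<open>auto simp: etp add_end_Cons\<close>)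
qed

lemma e0: "z \<in> lists A \<Longrightarrow> x \<in> lists A \<Longrightarrow> y \<in> lists A \<Longrightarrow>
  (z = [] \<longrightarrow> count_list x 0 = length y) \<Longrightarrow> (z \<noteq> [] \<longrightarrow> count_list x 1 = length y)
  \<Longrightarrow> wr_run (eT A) etape {5, 9} 0 [add_end z, add_end x, add_end y]"
proof (cases z)
  case Nil
  assume as: "z \<in> lists A" "x \<in> lists A" "y \<in> lists A" "z = [] \<longrightarrow> count_list x 0 = length y"
  have t: "(0, Some None, 2) \<in> eT A" unfolding eT_def by simp
  have sub: "blkT A 0 2 \<subseteq> eT A" unfolding eT_def by blast
  have hh: "wr_run (eT A) etape {5, 9} 2 [[], add_end x, add_end y]"
    by (rule blk_comp[OF sub etp(4,5,6), where x=x and y=y]) (use Nil as in \<open>auto simp: emp_def nth_Cons'\<close>)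
  show ?thesis
    by (rule stepI[where tape=etape and k=0 and r="[]", OF t]) (use hh Nil in \<open>auto simp: etp add_end_def\<close>)
next
  case (Cons a z')
  assume as: "z \<in> lists A" "x \<in> lists A" "y \<in> lists A" "z \<noteq> [] \<longrightarrow> count_list x 1 = length y"
  have t: "(0, Some (Some a), 1) \<in> eT A" using as Cons unfolding eT_def by simp
  have hh: "wr_run (eT A) etape {5, 9} 1 [add_end z', add_end x, add_end y]" using e1 as Cons by simp
  show ?thesis
    by (rule stepI[where tape=etape and k=0 and r="add_end z'", OF t]) (use hh Cons in \<open>auto simp: etp add_end_Cons\<close>)
qed

lemma wr_e:
  fixes A :: "nat set"
  assumes "0 \<in> A" "1 \<in> A"
  shows "weakly_regular A 3 {ws \<in> tuples A 3. \<exists>z x y. ws = [z, x, y] \<and>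
     (z = [] \<longrightarrow> count_list x 0 = length y) \<and> (z \<noteq> [] \<longrightarrow> count_list x 1 = length y)}"
  unfolding weakly_regular_def
proof (rule exI[of _ "{0..9}"], rule exI[of _ "{0}"], rule exI[of _ "{5,9}"], rule exI[of _ "eT A"],
    rule exI[of _ etape], intro conjI)
  show "eT A \<subseteq> {0..9} \<times> ({None, Some None} \<union> Some ` Some ` A) \<times> {0..9}"
    using assms unfolding eT_def blkT_def by auto
  show "\<forall>q\<in>{0..9}. etape q < 3" by (auto simp: etape_def)
  show "{ws \<in> tuples A 3. \<exists>z x y. ws = [z, x, y] \<and>
     (z = [] \<longrightarrow> count_list x 0 = length y) \<and> (z \<noteq> [] \<longrightarrow> count_list x 1 = length y)} =
    {ws \<in> tuples A 3. wr_accepts {0} (eT A) etape {5, 9} ws}"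
  proof (intro set_eqI iffI)
    fix ws assume "ws \<in> {ws \<in> tuples A 3. \<exists>z x y. ws = [z, x, y] \<and>
     (z = [] \<longrightarrow> count_list x 0 = length y) \<and> (z \<noteq> [] \<longrightarrow> count_list x 1 = length y)}"
    then obtain z x y where ws: "ws = [z, x, y]" "z \<in> lists A" "x \<in> lists A" "y \<in> lists A"
      "z = [] \<longrightarrow> count_list x 0 = length y" "z \<noteq> [] \<longrightarrow> count_list x 1 = length y" "ws \<in> tuples A 3"
      by (auto simp: tuples3)
    then show "ws \<in> {ws \<in> tuples A 3. wr_accepts {0} (eT A) etape {5, 9} ws}"
      using e0[of z A x y] by (auto simp: wr_accepts_def)
  next
    fix ws assume a: "ws \<in> {ws \<in> tuples A 3. wr_accepts {0} (eT A) etape {5, 9} ws}"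
    then have wt: "ws \<in> tuples A 3" by blast
    then obtain z x y where ws: "ws = [z, x, y]" by (auto simp: tuples3)
    have r: "wr_run (eT A) etape {5, 9} 0 [add_end z, add_end x, add_end y]"
      using a ws by (auto simp: wr_accepts_def)
    have "([add_end z, add_end x, add_end y] ! 0 = [None] \<and> RR 0 [add_end z, add_end x, add_end y]) \<or>
      (wfw ([add_end z, add_end x, add_end y] ! 0) \<and> [add_end z, add_end x, add_end y] ! 0 \<noteq> [None]
       \<and> RR 1 [add_end z, add_end x, add_end y])"
      using e_sound[OF r] by simp
    then have "(z = [] \<longrightarrow> count_list x 0 = length y) \<and> (z \<noteq> [] \<longrightarrow> count_list x 1 = length y)"
      by (cases z) (auto simp: RR_def add_end_Nil add_end_Cons)
    then show "ws \<in> {ws \<in> tuples A 3. \<exists>z x y. ws = [z, x, y] \<and>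
     (z = [] \<longrightarrow> count_list x 0 = length y) \<and> (z \<noteq> [] \<longrightarrow> count_list x 1 = length y)}"
      using ws wt by blast
  qed
qed auto



lemma count_rep: "count_list (replicate n a) b = (if a = b then n else 0)"
  by (induct n) auto

lemma nL0: "\<not> weakly_regular {0,1::nat} 2
   {ws \<in> tuples {0,1} 2. \<exists>x y. ws = [x, y] \<and> count_list x 0 = length y \<and> count_list x 1 = length y}"
proof
  assume wr: "weakly_regular {0,1::nat} 2
   {ws \<in> tuples {0,1} 2. \<exists>x y. ws = [x, y] \<and> count_list x 0 = length y \<and> count_list x 1 = length y}"
  show False
  proof (rule nonwr[OF wr, of 0 1])
    fix i
    show "\<exists>y. [replicate i (0::nat) @ replicate i 1, y] \<in>
      {ws \<in> tuples {0,1::nat} 2. \<exists>x y. ws = [x, y] \<and> count_list x 0 = length y \<and> count_list x 1 = length y}"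
      by (rule exI[of _ "replicate i (0::nat)"]) (auto simp: tuples2'' count_rep)
  next
    fix i j y
    assume "[replicate i 0 @ replicate j 1, y] \<in>
      {ws \<in> tuples {0,1::nat} 2. \<exists>x y. ws = [x, y] \<and> count_list x 0 = length y \<and> count_list x 1 = length y}"
    then show "i = j" by (auto simp: count_rep)
  qed auto
qed

theorem mainTheorem5:
  shows
  "(\<exists>(A::nat set) n P. finite A \<and> n \<ge> 1 \<and> weakly_regular A n P \<and>
        \<not> weakly_regular A n (tuples A n - P))
   \<and> (\<forall>(A::'a set) n P Q. finite A \<longrightarrow> n \<ge> 1 \<longrightarrow>
        weakly_regular A n P \<longrightarrow> weakly_regular A n Q \<longrightarrow> weakly_regular A n (P \<union> Q))
   \<and> (\<exists>(A::nat set) n P Q. finite A \<and> n \<ge> 1 \<and> weakly_regular A n P \<and>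
        weakly_regular A n Q \<and> \<not> weakly_regular A n (P \<inter> Q))
   \<and> (\<forall>(A::'a set) n P. finite A \<longrightarrow> n \<ge> 2 \<longrightarrow> weakly_regular A n P \<longrightarrow>
        weakly_regular A (n - 1) {xs. \<exists>x1 \<in> lists A. x1 # xs \<in> P})
   \<and> (\<exists>(A::nat set) n P. finite A \<and> n \<ge> 2 \<and> weakly_regular A n P \<and>
        \<not> weakly_regular A (n - 1)
            {xs \<in> tuples A (n - 1). \<forall>x1 \<in> lists A. x1 # xs \<in> P})"
proof (intro conjI)
  define L0 where "L0 = {ws \<in> tuples {0,1::nat} 2. \<exists>x y. ws = [x, y] \<and> count_list x 0 = length y \<and> count_list x 1 = length y}"
  have nL: "\<not> weakly_regular {0,1::nat} 2 L0" using nL0 unfolding L0_def .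
  show "\<exists>(A::nat set) n P. finite A \<and> n \<ge> 1 \<and> weakly_regular A n P \<and>
        \<not> weakly_regular A n (tuples A n - P)"
  proof (intro exI conjI)
    let ?P = "{ws \<in> tuples {0,1::nat} 2. \<exists>x y. ws = [x, y] \<and> count_list x 0 \<noteq> length y}
      \<union> {ws \<in> tuples {0,1::nat} 2. \<exists>x y. ws = [x, y] \<and> count_list x 1 \<noteq> length y}"
    show "weakly_regular {0,1::nat} 2 ?P" by (intro wr_union wr_comp) auto
    have "tuples {0,1::nat} 2 - ?P = L0"
    proof (intro set_eqI iffI)
      fix ws assume a: "ws \<in> tuples {0,1::nat} 2 - ?P"
      then obtain x y where xs: "ws = [x, y]" "x \<in> lists {0,1}" "y \<in> lists {0,1}"
        by (auto simp: tuples2'')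
      have "count_list x 0 = length y" "count_list x 1 = length y" using a xs by auto
      then show "ws \<in> L0" unfolding L0_def using xs a by auto
    next
      fix ws assume "ws \<in> L0"
      then show "ws \<in> tuples {0,1::nat} 2 - ?P" unfolding L0_def by auto
    qed
    then show "\<not> weakly_regular {0,1::nat} 2 (tuples {0,1::nat} 2 - ?P)" using nL by simp
  qed auto
  show "\<forall>(A::'a set) n P Q. finite A \<longrightarrow> n \<ge> 1 \<longrightarrow>
        weakly_regular A n P \<longrightarrow> weakly_regular A n Q \<longrightarrow> weakly_regular A n (P \<union> Q)"
    using wr_union by blast
  show "\<exists>(A::nat set) n P Q. finite A \<and> n \<ge> 1 \<and> weakly_regular A n P \<and>
        weakly_regular A n Q \<and> \<not> weakly_regular A n (P \<inter> Q)"
  proof (intro exI conjI)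
    let ?P = "{ws \<in> tuples {0,1::nat} 2. \<exists>x y. ws = [x, y] \<and> count_list x 0 = length y}"
    let ?Q = "{ws \<in> tuples {0,1::nat} 2. \<exists>x y. ws = [x, y] \<and> count_list x 1 = length y}"
    show "weakly_regular {0,1::nat} 2 ?P" by (rule wr_blk) auto
    show "weakly_regular {0,1::nat} 2 ?Q" by (rule wr_blk) auto
    have "?P \<inter> ?Q = L0" unfolding L0_def by auto
    then show "\<not> weakly_regular {0,1::nat} 2 (?P \<inter> ?Q)" using nL by simp
  qed auto
  show "\<forall>(A::'a set) n P. finite A \<longrightarrow> n \<ge> 2 \<longrightarrow> weakly_regular A n P \<longrightarrow>
        weakly_regular A (n - 1) {xs. \<exists>x1 \<in> lists A. x1 # xs \<in> P}"
    using wr_proj by blast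
  show "\<exists>(A::nat set) n P. finite A \<and> n \<ge> 2 \<and> weakly_regular A n P \<and>
        \<not> weakly_regular A (n - 1)
            {xs \<in> tuples A (n - 1). \<forall>x1 \<in> lists A. x1 # xs \<in> P}"
  proof (intro exI conjI)
    let ?P = "{ws \<in> tuples {0,1::nat} 3. \<exists>z x y. ws = [z, x, y] \<and>
     (z = [] \<longrightarrow> count_list x 0 = length y) \<and> (z \<noteq> [] \<longrightarrow> count_list x 1 = length y)}"
    show "weakly_regular {0,1::nat} 3 ?P" by (rule wr_e) auto
    have "{xs \<in> tuples {0,1::nat} (3 - 1). \<forall>x1 \<in> lists {0,1}. x1 # xs \<in> ?P} = L0"
    proof (intro set_eqI iffI)
      fix xs assume a: "xs \<in> {xs \<in> tuples {0,1::nat} (3 - 1). \<forall>x1 \<in> lists {0,1}. x1 # xs \<in> ?P}"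
      then obtain x y where xs: "xs = [x, y]" "x \<in> lists {0,1}" "y \<in> lists {0,1}"
        by (auto simp: tuples2'')
      have all: "\<forall>x1\<in>lists {0,1}. x1 # xs \<in> ?P" using a by blast
      have h1: "[] # xs \<in> ?P" using all by blast
      have h2: "[0] # xs \<in> ?P" using all[rule_format, of "[0]"] by simp
      have "count_list x 0 = length y" using h1 xs by auto
      moreover have "count_list x 1 = length y" using h2 xs by auto
      ultimately have "count_list x 0 = length y" "count_list x 1 = length y" by auto
      then show "xs \<in> L0" unfolding L0_def using xs by (auto simp: tuples2'')
    next
      fix xs assume "xs \<in> L0"
      then obtain x y where xs: "xs = [x, y]" "x \<in> lists {0,1}" "y \<in> lists {0,1}"
        "count_list x 0 = length y" "count_list x 1 = length y"
        unfolding L0_def by (auto simp: tuples2'')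
      then show "xs \<in> {xs \<in> tuples {0,1::nat} (3 - 1). \<forall>x1 \<in> lists {0,1}. x1 # xs \<in> ?P}"
        by (auto simp: tuples2'' tuples3)
    qed
    then show "\<not> weakly_regular {0,1::nat} (3 - 1) {xs \<in> tuples {0,1::nat} (3 - 1). \<forall>x1 \<in> lists {0,1}. x1 # xs \<in> ?P}"
      using nL by simp
  qed auto
qed


end
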